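(* Let $\tau\in\mathcal{H}$ with $\Im(\tau)\ge\sqrt3/4$ and $z\in\mathbb{C}$ with $0\le\Im(z)\le\Im(\tau)/4$. Then the optimal F sequence starting from $(\theta_{00}^2(z,\tau),\theta_{01}^2(z,\tau),\theta_{00}^2(0,\tau),\theta_{01}^2(0,\tau))$ converges quadratically to $(1,1,1,1)$ (each of its four coordinate sequences is quadratically convergent with limit $1$).
   Context: For $z\in\mathbb{C}$ and $\tau$ in the upper half-plane $\mathcal{H}=\{\tau\in\mathbb{C}:\Im\tau>0\}$, $\theta(z,\tau)=\sum_{n\in\mathbb{Z}}\exp(\pi i\tau n^2+2\pi i n z)$; $\theta_{00}(z,\tau)=\theta(z,\tau)$, $\theta_{01}(z,\tau)=\theta(z+\tfrac12,\tau)$. Optimal F sequence: given $(x_0,y_0,z_0,t_0)\in\mathbb{C}^4$, define recursively $$(x_{n+1},y_{n+1},z_{n+1},t_{n+1})=\Big(\tfrac{\sqrt{x_n}\sqrt{z_n}+\sqrt{y_n}\sqrt{t_n}}{2},\ \tfrac{\sqrt{x_n}\sqrt{t_n}+\sqrt{y_n}\sqrt{z_n}}{2},\ \tfrac{z_n+t_n}{2},\ \sqrt{z_n}\sqrt{t_n}\Big),$$ where at each rank the square roots are chosen "good": $\Re\sqrt{x_n}\ge0$, $\Re\sqrt{z_n}\ge0$; either $|\sqrt{x_n}-\sqrt{y_n}|<|\sqrt{x_n}+\sqrt{y_n}|$ or equality and $\Im(\sqrt{y_n}/\sqrt{x_n})>0$; either $|\sqrt{z_n}-\sqrt{t_n}|<|\sqrt{z_n}+\sqrt{t_n}|$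 or equality and $\Im(\sqrt{t_n}/\sqrt{z_n})>0$. A complex sequence $(a_n)$ converging to $\ell$ is quadratically convergent if there is $C>0$ such that $|a_{n+1}-a_n|\le C|a_n-a_{n-1}|^2$ for all $n$ large enough. *)

theory Defs
  imports "HOL-Analysis.Analysis"
begin

definition jtheta :: "complex \<Rightarrow> complex \<Rightarrow> complex" where
  "jtheta z \<tau> = (\<Sum>\<^sub>\<infinity>n\<in>(UNIV::int set).
      exp (complex_of_real pi * \<i> * \<tau> * (of_int n)^2 + 2 * complex_of_real pi * \<i> * of_int n * z))"

definition theta00 :: "complex \<Rightarrow> complex \<Rightarrow> complex" where
  "theta00 z \<tau> = jtheta z \<tau>"

definition theta01 :: "complex \<Rightarrow> complex \<Rightarrow> complex" where
  "theta01 z \<tau> = jtheta (z + 1/2) \<tau>"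

definition good_roots :: "complex \<Rightarrow> complex \<Rightarrow> complex \<Rightarrow> complex \<Rightarrow> bool" where
  "good_roots u v a b \<longleftrightarrow> a^2 = u \<and> b^2 = v \<and> Re a \<ge> 0 \<and>
     (cmod (a - b) < cmod (a + b) \<or> (cmod (a - b) = cmod (a + b) \<and> Im (b / a) > 0))"

definition optimal_F_seq ::
  "(nat \<Rightarrow> complex) \<Rightarrow> (nat \<Rightarrow> complex) \<Rightarrow> (nat \<Rightarrow> complex) \<Rightarrow> (nat \<Rightarrow> complex) \<Rightarrow>
   complex \<Rightarrow> complex \<Rightarrow> complex \<Rightarrow> complex \<Rightarrow> bool" where
  "optimal_F_seq x y z t x0 y0 z0 t0 \<longleftrightarrow>
     x 0 = x0 \<and> y 0 = y0 \<and> z 0 = z0 \<and> t 0 = t0 \<and>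
     (\<forall>n. \<exists>a b c d. good_roots (x n) (y n) a b \<and> good_roots (z n) (t n) c d \<and>
        x (Suc n) = (a * c + b * d) / 2 \<and> y (Suc n) = (a * d + b * c) / 2 \<and>
        z (Suc n) = (z n + t n) / 2 \<and> t (Suc n) = c * d)"

definition quad_convergent :: "(nat \<Rightarrow> complex) \<Rightarrow> complex \<Rightarrow> bool" where
  "quad_convergent a l \<longleftrightarrow> a \<longlonglongrightarrow> l \<and>
     (\<exists>C>0. \<forall>\<^sub>F n in sequentially. cmod (a (Suc n) - a n) \<le> C * (cmod (a n - a (n - 1)))^2)"

end

theory Submission
  imports Defs "HOL-Complex_Analysis.Complex_Analysis" "HOL-Library.Nat_Bijection"
begin


lemma geo_has_sum_nat:
  fixes r :: real assumes "0 \<le> r" "r < 1"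
  shows "((\<lambda>n::nat. r^(n+N)) has_sum (r^N/(1-r))) UNIV"
proof -
  have "(\<lambda>n. r^N * r^n) sums (r^N * (1/(1-r)))"
    by (rule sums_mult) (use geometric_sums[of r] assms in auto)
  hence s: "(\<lambda>n. r^(n+N)) sums (r^N/(1-r))" by (simp add: power_add mult.commute)
  have "summable (\<lambda>n. norm (r^(n+N)))" using s assms by (simp add: sums_iff)
  thus ?thesis by (rule norm_summable_imp_has_sum[OF _ s])
qed

lemma geo_has_sum_pos:
  fixes r :: real assumes "0 \<le> r" "r < 1" "N \<ge> 0"
  shows "((\<lambda>k::int. r^(nat \<bar>k\<bar>)) has_sum (r^(nat N)/(1-r))) {k. k \<ge> N}"
proof -
  have b: "bij_betw (\<lambda>n::nat. int n + N) UNIV {k. k \<ge> N}"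
    by (rule bij_betwI[where g="\<lambda>k. nat (k - N)"]) auto
  have "((\<lambda>n::nat. r^(nat \<bar>int n + N\<bar>)) has_sum (r^(nat N)/(1-r))) UNIV"
  proof -
    have "\<And>n::nat. nat \<bar>int n + N\<bar> = n + nat N" using assms(3) by auto
    thus ?thesis using geo_has_sum_nat[OF assms(1,2), of "nat N"] by simp
  qed
  thus ?thesis using has_sum_reindex_bij_betw[OF b, of "\<lambda>k. r^(nat \<bar>k\<bar>)"] by simp
qed

lemma geo_has_sum_neg:
  fixes r :: real assumes "0 \<le> r" "r < 1" "N \<ge> 0"
  shows "((\<lambda>k::int. r^(nat \<bar>k\<bar>)) has_sum (r^(nat N)/(1-r))) {k. k \<le> -N}"
proof -
  have b: "bij_betw (\<lambda>n::nat. - (int n + N)) UNIV {k. k \<le> -N}"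
    by (rule bij_betwI[where g="\<lambda>k. nat (- k - N)"]) auto
  have "((\<lambda>n::nat. r^(nat \<bar>- (int n + N)\<bar>)) has_sum (r^(nat N)/(1-r))) UNIV"
  proof -
    have "\<And>n::nat. nat \<bar>- (int n + N)\<bar> = n + nat N" using assms(3) by auto
    thus ?thesis using geo_has_sum_nat[OF assms(1,2), of "nat N"] by simp
  qed
  thus ?thesis using has_sum_reindex_bij_betw[OF b, of "\<lambda>k. r^(nat \<bar>k\<bar>)"] by simp
qed

lemma geo_has_sum_tail:
  fixes r :: real assumes "0 \<le> r" "r < 1" "N \<ge> 1"
  shows "((\<lambda>k::int. r^(nat \<bar>k\<bar>)) has_sum (2*r^(nat N)/(1-r))) {k. \<bar>k\<bar> \<ge> N}"
proof -
  have "{k::int. \<bar>k\<bar> \<ge> N} = {k. k \<ge> N} \<union> {k. k \<le> -N}" by auto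
  moreover have "((\<lambda>k::int. r^(nat \<bar>k\<bar>)) has_sum (r^(nat N)/(1-r) + r^(nat N)/(1-r))) ({k. k \<ge> N} \<union> {k. k \<le> -N})"
    by (rule has_sum_Un_disjoint) (use geo_has_sum_pos[OF assms(1,2)] geo_has_sum_neg[OF assms(1,2)] assms(3) in auto)
  ultimately show ?thesis by simp
qed

lemma geo_summable_int:
  fixes r :: real assumes "0 \<le> r" "r < 1"
  shows "(\<lambda>k::int. r^(nat \<bar>k\<bar>)) summable_on UNIV"
proof -
  have "UNIV = {0::int} \<union> {k. \<bar>k\<bar> \<ge> 1}" by auto
  moreover have "(\<lambda>k::int. r^(nat \<bar>k\<bar>)) summable_on ({0::int} \<union> {k. \<bar>k\<bar> \<ge> 1})"
    by (rule summable_on_union) (use geo_has_sum_tail[OF assms, of 1] has_sum_imp_summable in auto)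
  ultimately show ?thesis by simp
qed




definition tg :: "complex \<Rightarrow> complex \<Rightarrow> int \<Rightarrow> complex" where
  "tg z T n = exp (complex_of_real pi * \<i> * T * (of_int n)^2 + 2 * complex_of_real pi * \<i> * of_int n * z)"

lemma jtheta_tg: "jtheta z T = infsum (tg z T) UNIV"
  unfolding jtheta_def tg_def by simp

lemma norm_tg: "norm (tg z T n) = exp (- pi * Im T * (of_int n)^2 - 2 * pi * of_int n * Im z)"
proof -
  have "Re (complex_of_real pi * \<i> * T * (of_int n)^2 + 2 * complex_of_real pi * \<i> * of_int n * z)
      = - pi * Im T * (of_int n)^2 - 2 * pi * of_int n * Im z"
    by (simp add: power2_eq_square algebra_simps)
  thus ?thesis unfolding tg_def by simp
qed

lemma quad_bound:
  fixes a c x :: real assumes "a > 0"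
  shows "- a * x^2 + c * x \<le> c^2 / (4*a)"
proof -
  have "0 \<le> (2*a*x - c)^2" by simp
  hence "0 \<le> 4*a*a*x^2 - 4*a*c*x + c^2" by (simp add: power2_eq_square algebra_simps)
  hence "4*a*(- a * x^2 + c * x) \<le> c^2" by (simp add: algebra_simps power2_eq_square)
  thus ?thesis using assms by (simp add: field_simps)
qed

lemma norm_tg_le:
  assumes "Im T > 0"
  shows "norm (tg z T n) \<le> exp ((2*pi*\<bar>Im z\<bar>+1)^2/(4*(pi*Im T))) * exp (-1) ^ nat \<bar>n\<bar>"
proof -
  define a where "a = pi * Im T"
  define c where "c = 2*pi*\<bar>Im z\<bar>+1"
  have a: "a > 0" using assms by (simp add: a_def)
  have "- 2 * pi * of_int n * Im z \<le> 2*pi*\<bar>Im z\<bar> * \<bar>of_int n\<bar>"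
  proof -
    have "- (of_int n * Im z) \<le> \<bar>Im z\<bar> * \<bar>of_int n\<bar>"
      by (metis abs_ge_minus_self abs_mult mult.commute)
    hence "pi * (- (of_int n * Im z)) \<le> pi * (\<bar>Im z\<bar> * \<bar>of_int n\<bar>)"
      by (rule mult_left_mono) simp
    thus ?thesis by (simp add: algebra_simps)
  qed
  hence "- pi * Im T * (of_int n)^2 - 2 * pi * of_int n * Im z
        \<le> - a * \<bar>of_int n\<bar>^2 + c * \<bar>of_int n\<bar> - \<bar>of_int n\<bar>"
    by (simp add: a_def c_def algebra_simps)
  also have "\<dots> \<le> c^2/(4*a) - \<bar>of_int n\<bar>" using quad_bound[OF a, where c=c and x="\<bar>of_int n\<bar>"] by simp
  finally have 1: "- pi * Im T * (of_int n)^2 - 2 * pi * of_int n * Im z \<le> c^2/(4*a) - \<bar>of_int n\<bar>" .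
  have 2: "exp (c^2/(4*a) - \<bar>of_int n\<bar>) = exp (c^2/(4*a)) * exp (-1) ^ nat \<bar>n\<bar>"
  proof -
    have "exp (- \<bar>real_of_int n\<bar>) = exp (of_nat (nat \<bar>n\<bar>) * (-1))" by simp
    also have "\<dots> = exp (-1) ^ nat \<bar>n\<bar>" by (rule exp_of_nat_mult)
    finally show ?thesis by (simp add: exp_diff exp_minus field_simps)
  qed
  have "norm (tg z T n) \<le> exp (c^2/(4*a) - \<bar>of_int n\<bar>)" unfolding norm_tg using 1 by simp
  thus ?thesis unfolding 2 by (simp add: a_def c_def)
qed

lemma tg_abs_summable:
  assumes "Im T > 0"
  shows "(\<lambda>n. norm (tg z T n)) summable_on UNIV"
proof -
  define C where "C = exp ((2*pi*\<bar>Im z\<bar>+1)^2/(4*(pi*Im T)))"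
  have "(\<lambda>n::int. exp (-1::real) ^ nat \<bar>n\<bar>) summable_on UNIV"
    by (rule geo_summable_int) auto
  hence "(\<lambda>n::int. C * exp (-1::real) ^ nat \<bar>n\<bar>) summable_on UNIV"
    by (rule summable_on_cmult_right)
  thus ?thesis
    by (rule summable_on_comparison_test) (use norm_tg_le[OF assms] in \<open>auto simp: C_def\<close>)
qed

lemma tg_summable:
  assumes "Im T > 0"
  shows "tg z T summable_on UNIV"
  by (rule abs_summable_summable) (rule tg_abs_summable[OF assms])

lemma prod_infsum:
  fixes f g :: "int \<Rightarrow> complex"
  assumes f: "(\<lambda>n. norm (f n)) summable_on UNIV" and g: "(\<lambda>n. norm (g n)) summable_on UNIV"
  shows "(\<lambda>(m,n). f m * g n) summable_on UNIV"
    and "infsum (\<lambda>(m,n). f m * g n) UNIV = infsum f UNIV * infsum g UNIV"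
proof -
  define G where "G = infsum (\<lambda>n. norm (g n)) UNIV"
  have hs: "((\<lambda>y. (\<lambda>(m,n). norm (f m) * norm (g n)) (x, y)) has_sum (norm (f x) * G)) UNIV" for x
    using has_sum_cmult_right[OF has_sum_infsum[OF g], of "norm (f x)"] by (simp add: G_def)
  have s1: "(\<lambda>(m,n). norm (f m) * norm (g n)) summable_on Sigma UNIV (\<lambda>_. UNIV)"
    by (rule summable_on_SigmaI[OF hs]) (use summable_on_cmult_left[OF f] in auto)
  have "(\<lambda>p. norm ((\<lambda>(m,n). f m * g n) p)) summable_on UNIV"
    using s1 by (simp add: case_prod_unfold norm_mult)
  thus s: "(\<lambda>(m,n). f m * g n) summable_on UNIV"
    by (rule abs_summable_summable)
  have fs: "f summable_on UNIV" using f by (rule abs_summable_summable)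
  have gs: "g summable_on UNIV" using g by (rule abs_summable_summable)
  have "infsum (\<lambda>(m,n). f m * g n) (Sigma UNIV (\<lambda>_. UNIV)) = infsum (\<lambda>x. infsum (\<lambda>y. (\<lambda>(m,n). f m * g n) (x,y)) UNIV) UNIV"
    by (rule infsum_Sigma_banach[symmetric]) (use s in simp)
  also have "\<dots> = infsum (\<lambda>x. f x * infsum g UNIV) UNIV"
    by (simp add: infsum_cmult_right')
  also have "\<dots> = infsum f UNIV * infsum g UNIV"
    by (simp add: infsum_cmult_left')
  finally show "infsum (\<lambda>(m,n). f m * g n) UNIV = infsum f UNIV * infsum g UNIV" by simp
qed




lemma exp_pi_int: "exp (complex_of_real pi * \<i> * of_int m) = (if even m then 1 else -1)"
proof (cases "even m")
  case True
  then obtain k where k: "m = 2*k" by (auto elim: evenE)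
  have "exp ((2 * of_int k * pi) * \<i>) = 1" by (rule exp_integer_2pi) simp
  thus ?thesis using True k by (simp add: algebra_simps)
next
  case False
  then obtain k where k: "m = 2*k+1" by (auto elim: oddE)
  have "exp (((2 * of_int k + 1) * pi) * \<i>) = -1" by (rule exp_integer_2pi_plus1) simp
  thus ?thesis using False k by (simp add: algebra_simps)
qed

lemma tg_half: "tg (z + 1/2) T m = (if even m then 1 else -1) * tg z T m"
proof -
  have "tg (z + 1/2) T m = exp ((complex_of_real pi * \<i> * T * (of_int m)^2 + 2 * complex_of_real pi * \<i> * of_int m * z) + complex_of_real pi * \<i> * of_int m)"
    unfolding tg_def by (rule arg_cong[where f=exp]) (simp add: algebra_simps)
  also have "\<dots> = tg z T m * (if even m then 1 else -1)"
    unfolding exp_add exp_pi_int tg_def ..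
  finally show ?thesis by simp
qed

lemma tg_one: "tg (z + 1) T m = tg z T m"
proof -
  have "tg (z + 1) T m = tg ((z + 1/2) + 1/2) T m" by (simp add: add.assoc)
  also have "\<dots> = tg z T m" unfolding tg_half by simp
  finally show ?thesis .
qed

lemma jtheta_plus1: "jtheta (z + 1) T = jtheta z T"
  unfolding jtheta_tg tg_one ..

lemma tg_dup: "tg x T (j+k) * tg y T (j-k) = tg (x+y) (2*T) j * tg (x-y) (2*T) k"
  unfolding tg_def exp_add[symmetric]
  by (rule arg_cong[where f=exp]) (simp add: power2_eq_square algebra_simps)

lemma bij_dup: "bij_betw (\<lambda>(j::int,k::int). (j+k, j-k)) UNIV {(m,n). even (m+n)}"
proof (rule bij_betwI[where g="\<lambda>(m,n). ((m+n) div 2, (m-n) div 2)"])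
  show "(\<lambda>(j::int,k::int). (j+k, j-k)) \<in> UNIV \<rightarrow> {(m,n). even (m+n)}" by auto
  show "(\<lambda>(m::int,n::int). ((m+n) div 2, (m-n) div 2)) \<in> {(m,n). even (m+n)} \<rightarrow> UNIV" by auto
  show "(\<lambda>(m,n). ((m+n) div 2, (m-n) div 2)) ((\<lambda>(j,k). (j+k, j-k)) x) = x" for x :: "int \<times> int"
    by (cases x) auto
  show "(\<lambda>(j,k). (j+k, j-k)) ((\<lambda>(m,n). ((m+n) div 2, (m-n) div 2)) y) = y" if "y \<in> {(m::int,n::int). even (m+n)}" for y
  proof -
    obtain m n where y: "y = (m,n)" by (cases y)
    have "even (m+n)" using that y by auto
    then obtain k where k: "m + n = 2*k" by (rule evenE)
    have k2: "m - n = 2*(k-n)" using k by simp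
    have "(m+n) div 2 = k" "(m-n) div 2 = k - n" unfolding k k2 by simp_all
    thus ?thesis using y k by auto
  qed
qed

lemma jtheta_dup:
  assumes "Im T > 0"
  shows "jtheta x T * jtheta y T + jtheta (x+1/2) T * jtheta (y+1/2) T
       = 2 * (jtheta (x+y) (2*T) * jtheta (x-y) (2*T))"
proof -
  define h where "h = (\<lambda>(m,n). tg x T m * tg y T n)"
  define h2 where "h2 = (\<lambda>(m,n). tg (x+1/2) T m * tg (y+1/2) T n)"
  have T2: "Im (2*T) > 0" using assms by simp
  have sh: "h summable_on UNIV" and ih: "infsum h UNIV = jtheta x T * jtheta y T"
    using prod_infsum[OF tg_abs_summable[OF assms] tg_abs_summable[OF assms]]
    unfolding h_def jtheta_tg by auto
  have sh2: "h2 summable_on UNIV" and ih2: "infsum h2 UNIV = jtheta (x+1/2) T * jtheta (y+1/2) T"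
    using prod_infsum[OF tg_abs_summable[OF assms] tg_abs_summable[OF assms]]
    unfolding h2_def jtheta_tg by auto
  have "jtheta x T * jtheta y T + jtheta (x+1/2) T * jtheta (y+1/2) T = infsum (\<lambda>p. h p + h2 p) UNIV"
    using infsum_add[OF sh sh2] ih ih2 by simp
  also have "\<dots> = infsum (\<lambda>p. if p \<in> {(m,n). even (m+n)} then 2 * h p else 0) UNIV"
  proof (rule infsum_cong)
    fix p :: "int \<times> int"
    obtain m n where p: "p = (m,n)" by (cases p)
    show "h p + h2 p = (if p \<in> {(m,n). even (m+n)} then 2 * h p else 0)"
      unfolding p h_def h2_def tg_half by auto
  qed
  also have "\<dots> = infsum (\<lambda>p. 2 * h p) {(m,n). even (m+n)}"
    by (rule infsum_cong_neutral) auto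
  also have "\<dots> = 2 * infsum h {(m,n). even (m+n)}"
    by (rule infsum_cmult_right')
  also have "infsum h {(m,n). even (m+n)} = infsum (\<lambda>p. h ((\<lambda>(j,k). (j+k, j-k)) p)) UNIV"
    by (rule infsum_reindex_bij_betw[OF bij_dup, symmetric])
  also have "\<dots> = infsum (\<lambda>(j,k). tg (x+y) (2*T) j * tg (x-y) (2*T) k) UNIV"
    by (rule infsum_cong) (auto simp: h_def tg_dup)
  also have "\<dots> = jtheta (x+y) (2*T) * jtheta (x-y) (2*T)"
    using prod_infsum(2)[OF tg_abs_summable[OF T2] tg_abs_summable[OF T2]]
    unfolding jtheta_tg by simp
  finally show ?thesis .
qed




lemma step_x:
  assumes "Im T > 0"
  shows "(theta00 w T * theta00 0 T + theta01 w T * theta01 0 T) / 2 = (theta00 w (2*T))^2"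
  using jtheta_dup[OF assms, of w 0] unfolding theta00_def theta01_def
  by (simp add: power2_eq_square)

lemma step_y:
  assumes "Im T > 0"
  shows "(theta00 w T * theta01 0 T + theta01 w T * theta00 0 T) / 2 = (theta01 w (2*T))^2"
proof -
  have e: "jtheta (1/2 + 1/2) T = jtheta 0 T" using jtheta_plus1[of 0 T] by simp
  have f: "jtheta (w - 1/2) (2*T) = jtheta (w + 1/2) (2*T)"
    using jtheta_plus1[of "w - 1/2" "2*T"] by (simp add: algebra_simps)
  show ?thesis
    using jtheta_dup[OF assms, of w "1/2"] e f unfolding theta00_def theta01_def
    by (simp add: power2_eq_square)
qed

lemma step_z:
  assumes "Im T > 0"
  shows "(theta00 0 T ^2 + theta01 0 T ^2) / 2 = (theta00 0 (2*T))^2"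
  using step_x[OF assms, of 0] by (simp add: power2_eq_square)

lemma step_t:
  assumes "Im T > 0"
  shows "theta00 0 T * theta01 0 T = (theta01 0 (2*T))^2"
  using step_y[OF assms, of 0] by (simp add: algebra_simps)




lemma sqrt3_ge: "sqrt 3 \<ge> (1.732::real)"
  by (rule real_le_rsqrt) (simp add: power2_eq_square)

lemma s_bound:
  assumes "Im T \<ge> sqrt 3 / 4"
  shows "exp (- pi * Im T / 2) \<le> 27/50"
proof -
  have "pi * Im T / 2 \<ge> 3 * (1.732/4) / 2"
  proof -
    have "Im T \<ge> 1.732/4" using assms sqrt3_ge by simp
    hence "pi * Im T \<ge> 3 * (1.732/4)" using pi_gt3 by (intro mult_mono) auto
    thus ?thesis by simp
  qed
  hence x: "pi * Im T / 2 \<ge> 0.6495" by simp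
  have "exp (pi * Im T / 2) \<ge> 1 + 0.6495 + 0.6495^2/2"
  proof -
    have "1 + 0.6495 + (0.6495::real)^2/2 \<le> 1 + pi * Im T / 2 + (pi * Im T / 2)^2/2"
      using x by (intro add_mono power_mono divide_right_mono) auto
    also have "\<dots> \<le> exp (pi * Im T / 2)" by (rule exp_lower_Taylor_quadratic) (use x in simp)
    finally show ?thesis .
  qed
  moreover have "(50/27::real) \<le> 1 + 0.6495 + 0.6495^2/2" by (simp add: power2_eq_square)
  ultimately have "exp (pi * Im T / 2) \<ge> 50/27" by linarith
  hence "inverse (exp (pi * Im T / 2)) \<le> 27/50"
    by (metis inverse_inverse_eq le_imp_inverse_le inverse_divide zero_less_divide_iff zero_less_numeral)
  thus ?thesis by (simp add: exp_minus[symmetric])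
qed

locale tbounds =
  fixes T x :: complex
  assumes T: "Im T \<ge> sqrt 3 / 4" and x0: "0 \<le> Im x" and x1: "Im x \<le> Im T / 4"
begin

lemma Tpos: "Im T > 0"
  using T by (smt (verit) real_sqrt_gt_zero divide_pos_pos)

definition "s = exp (- pi * Im T / 2)"
definition "r = exp (- 3 * pi * Im T / 2)"

lemma s: "s \<le> 27/50" "s \<ge> 0" unfolding s_def using s_bound[OF T] by auto

lemma r_eq: "r = s^3"
proof -
  have "r = exp (of_nat 3 * (- pi * Im T / 2))" unfolding r_def by simp
  thus ?thesis unfolding exp_of_nat_mult s_def .
qed

lemma r: "r \<le> 0.158" "r \<ge> 0" "r < 1"
proof -
  have "s^3 \<le> (27/50)^3" using s by (intro power_mono) auto
  also have "(27/50::real)^3 \<le> 0.158" by (simp add: power3_eq_cube)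
  finally show "r \<le> 0.158" unfolding r_eq .
  thus "r < 1" by simp
  show "r \<ge> 0" unfolding r_def by simp
qed

lemma tail_term:
  assumes k: "\<bar>k\<bar> \<ge> 2"
  shows "norm (tg x T k) \<le> r ^ nat \<bar>k\<bar>"
proof -
  have a: "- 2 * pi * of_int k * Im x \<le> pi * Im T / 2 * \<bar>of_int k\<bar>"
  proof -
    have "- (of_int k * Im x) \<le> \<bar>of_int k\<bar> * Im x" using x0
      by (metis abs_ge_minus_self abs_mult abs_of_nonneg)
    also have "\<dots> \<le> \<bar>of_int k\<bar> * (Im T / 4)" using x1 by (intro mult_left_mono) auto
    finally have "pi * (- (of_int k * Im x)) \<le> pi * (\<bar>of_int k\<bar> * (Im T / 4))"
      by (intro mult_left_mono) auto
    thus ?thesis by (simp add: algebra_simps)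
  qed
  have b: "pi * Im T * (2 * \<bar>of_int k\<bar>) \<le> pi * Im T * (of_int k)^2"
  proof -
    have "2 * \<bar>real_of_int k\<bar> \<le> \<bar>of_int k\<bar> * \<bar>of_int k\<bar>"
      using k by (intro mult_right_mono) auto
    hence "2 * \<bar>real_of_int k\<bar> \<le> (of_int k)^2" by (simp add: power2_eq_square)
    thus ?thesis using Tpos by (intro mult_left_mono) auto
  qed
  have a': "-2*(pi * of_int k * Im x) \<le> (pi*Im T*\<bar>of_int k\<bar>)/2" using a by (simp add: algebra_simps)
  have b': "2*(pi*Im T*\<bar>of_int k\<bar>) \<le> pi*Im T*(of_int k)^2" using b by (simp add: algebra_simps)
  have c: "-(pi*Im T*(of_int k)^2) - 2*(pi * of_int k*Im x) \<le> -3/2*(pi*Im T*\<bar>of_int k\<bar>)"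
    using a' b' by linarith
  have "- pi * Im T * (of_int k)^2 - 2 * pi * of_int k * Im x \<le> (- 3 * pi * Im T / 2) * \<bar>of_int k\<bar>"
    using c by (simp add: algebra_simps)
  hence "norm (tg x T k) \<le> exp (of_nat (nat \<bar>k\<bar>) * (- 3 * pi * Im T / 2))"
    unfolding norm_tg by (simp add: mult.commute)
  thus ?thesis unfolding exp_of_nat_mult r_def .
qed

lemma term1: "norm (tg x T 1) \<le> s^2"
proof -
  have "norm (tg x T 1) \<le> exp (of_nat 2 * (- pi * Im T / 2))"
    unfolding norm_tg using x0 Tpos by simp
  thus ?thesis unfolding exp_of_nat_mult s_def .
qed

lemma term_m1: "norm (tg x T (-1)) \<le> s"
proof -
  have "pi * (Im x * 4) \<le> pi * Im T" using x1 by (intro mult_left_mono) auto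
  hence h: "2*(pi*Im x) \<le> (pi*Im T)/2" by (simp add: algebra_simps)
  have e: "-pi*Im T*(of_int(-1::int))^2 - 2*pi * of_int(-1::int)*Im x = -(pi*Im T) + 2*(pi*Im x)" by simp
  have "-pi*Im T*(of_int(-1::int))^2 - 2*pi * of_int(-1::int)*Im x \<le> - pi * Im T / 2"
    unfolding e using h by linarith
  thus ?thesis unfolding norm_tg s_def by (simp only: exp_le_cancel_iff)
qed

lemma tail_bound: "norm (infsum (tg x T) {k. \<bar>k\<bar> \<ge> 2}) \<le> 0.06"
proof -
  have hs: "((\<lambda>k::int. r^(nat \<bar>k\<bar>)) has_sum (2*r^(nat 2)/(1-r))) {k. \<bar>k\<bar> \<ge> 2}"
    by (rule geo_has_sum_tail) (use r in auto)
  have ns: "(\<lambda>k. norm (tg x T k)) summable_on {k. \<bar>k\<bar> \<ge> 2}"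
    by (rule summable_on_subset[OF tg_abs_summable[OF Tpos]]) auto
  have "norm (infsum (tg x T) {k. \<bar>k\<bar> \<ge> 2}) \<le> infsum (\<lambda>k. norm (tg x T k)) {k. \<bar>k\<bar> \<ge> 2}"
    by (rule norm_infsum_bound) (rule ns)
  also have "\<dots> \<le> infsum (\<lambda>k::int. r^(nat \<bar>k\<bar>)) {k. \<bar>k\<bar> \<ge> 2}"
    by (rule infsum_mono[OF ns has_sum_imp_summable[OF hs]]) (use tail_term in auto)
  also have "\<dots> = 2*r^2/(1-r)" using infsumI[OF hs] by simp
  also have "\<dots> \<le> 0.06"
  proof -
    have r1: "r \<le> 79/500" using r by simp
    have "r^2 \<le> (79/500)^2" using r1 r by (intro power_mono) auto
    also have "((79/500)::real)^2 = 6241/250000" by (simp add: power2_eq_square)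
    finally have "r^2 \<le> 6241/250000" .
    hence "2*r^2 + 3/50*r \<le> 3/50" using r1 by linarith
    hence "2*r^2 \<le> 3/50*(1-r)" by (simp add: algebra_simps)
    thus ?thesis using r by (simp add: field_simps)
  qed
  finally show ?thesis .
qed

lemma decomp:
  "jtheta x T = 1 + (tg x T 1 + tg x T (-1)) + infsum (tg x T) {k. \<bar>k\<bar> \<ge> 2}"
proof -
  have U: "UNIV = {-1,0,1::int} \<union> {k. \<bar>k\<bar> \<ge> 2}" by auto
  have "jtheta x T = infsum (tg x T) ({-1,0,1} \<union> {k. \<bar>k\<bar> \<ge> 2})"
    unfolding jtheta_tg U[symmetric] ..
  also have "\<dots> = infsum (tg x T) {-1,0,1} + infsum (tg x T) {k. \<bar>k\<bar> \<ge> 2}"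
    by (rule infsum_Un_disjoint)
       (auto intro: summable_on_subset[OF tg_summable[OF Tpos]])
  also have "infsum (tg x T) {-1,0,1} = tg x T (-1) + tg x T 0 + tg x T 1" by simp
  also have "tg x T 0 = 1" unfolding tg_def by simp
  finally show ?thesis by (simp add: algebra_simps)
qed

end




lemma good_theta:
  assumes T: "Im T \<ge> sqrt 3 / 4" and w0: "0 \<le> Im w" and w1: "Im w \<le> Im T / 4"
  shows "Re (jtheta w T) > 0"
    and "cmod (jtheta w T - jtheta (w+1/2) T) < cmod (jtheta w T + jtheta (w+1/2) T)"
proof -
  interpret A: tbounds T w using assms by unfold_locales
  interpret B: tbounds T "w+1/2" using assms by unfold_locales auto
  define u where "u = tg w T 1 + tg w T (-1)"
  define R where "R = infsum (tg w T) {k. \<bar>k\<bar> \<ge> 2}"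
  define R' where "R' = infsum (tg (w+1/2) T) {k. \<bar>k\<bar> \<ge> 2}"
  have a: "jtheta w T = 1 + u + R" using A.decomp unfolding u_def R_def .
  have b: "jtheta (w+1/2) T = 1 - u + R'" using B.decomp unfolding u_def R'_def tg_half by simp
  have R: "cmod R \<le> 3/50" using A.tail_bound unfolding R_def by simp
  have R': "cmod R' \<le> 3/50" using B.tail_bound unfolding R'_def by simp
  have "cmod u \<le> A.s^2 + A.s" unfolding u_def
    using norm_triangle_ineq[of "tg w T 1" "tg w T (-1)"] A.term1 A.term_m1 by linarith
  also have "A.s^2 \<le> (27/50)^2" using A.s by (intro power_mono) auto
  hence "A.s^2 + A.s \<le> (27/50)^2 + 27/50" using A.s by linarith
  finally have u: "cmod u \<le> 2079/2500" by (simp add: power2_eq_square)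
  have "Re (jtheta w T) = 1 + Re u + Re R" unfolding a by simp
  moreover have "- Re u \<le> cmod u" "- Re R \<le> cmod R"
    using abs_Re_le_cmod[of u] abs_Re_le_cmod[of R] by linarith+
  ultimately show "Re (jtheta w T) > 0" using u R by linarith
  have "jtheta w T - jtheta (w+1/2) T = 2*u + (R - R')" unfolding a b by simp
  hence "cmod (jtheta w T - jtheta (w+1/2) T) \<le> cmod (2*u) + cmod (R - R')"
    by (metis norm_triangle_ineq)
  moreover have "cmod (R - R') \<le> cmod R + cmod R'" by (rule norm_triangle_ineq4)
  moreover have "cmod (2*u) = 2 * cmod u" by (simp add: norm_mult)
  ultimately have d: "cmod (jtheta w T - jtheta (w+1/2) T) \<le> 2229/1250" using u R R' by linarith
  have "jtheta w T + jtheta (w+1/2) T = 2 + (R + R')" unfolding a b by simp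
  hence "cmod (jtheta w T + jtheta (w+1/2) T) \<ge> cmod (2::complex) - cmod (R + R')"
    by (metis norm_diff_ineq)
  moreover have "cmod (R + R') \<le> cmod R + cmod R'" by (rule norm_triangle_ineq)
  ultimately have "cmod (jtheta w T + jtheta (w+1/2) T) \<ge> 47/25" using R R' by simp
  thus "cmod (jtheta w T - jtheta (w+1/2) T) < cmod (jtheta w T + jtheta (w+1/2) T)" using d by linarith
qed

lemma good_roots_unique:
  assumes g: "good_roots (A^2) (B^2) a b" and A: "Re A > 0"
    and AB: "cmod (A - B) < cmod (A + B)"
  shows "a = A \<and> b = B"
proof -
  have a2: "a^2 = A^2" and b2: "b^2 = B^2" and ra: "Re a \<ge> 0"
    and c: "cmod (a - b) < cmod (a + b) \<or> (cmod (a - b) = cmod (a + b) \<and> Im (b / a) > 0)"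
    using g unfolding good_roots_def by auto
  have "a = A \<or> a = -A" using a2 by (simp add: power2_eq_iff)
  hence aA: "a = A" using A ra by auto
  have "b = B \<or> b = -B" using b2 by (simp add: power2_eq_iff)
  moreover have "b \<noteq> -B"
  proof
    assume "b = -B"
    hence "cmod (A + B) < cmod (A - B) \<or> cmod (A + B) = cmod (A - B)"
      using c aA by auto
    thus False using AB by auto
  qed
  ultimately show ?thesis using aA by auto
qed




lemma Im_pow2: "Im ((2::complex)^n * \<tau>) = 2^n * Im \<tau>"
proof -
  have "(2::complex)^n = complex_of_real (2^n)" by simp
  thus ?thesis by simp
qed

lemma seq_theta:
  assumes T: "Im \<tau> \<ge> sqrt 3 / 4" and w0: "0 \<le> Im w" and w1: "Im w \<le> Im \<tau> / 4"
    and F: "optimal_F_seq x y z t ((theta00 w \<tau>)^2) ((theta01 w \<tau>)^2) ((theta00 0 \<tau>)^2) ((theta01 0 \<tau>)^2)"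
  shows "x n = (theta00 w (2^n*\<tau>))^2 \<and> y n = (theta01 w (2^n*\<tau>))^2 \<and>
         z n = (theta00 0 (2^n*\<tau>))^2 \<and> t n = (theta01 0 (2^n*\<tau>))^2"
proof (induction n)
  case 0
  then show ?case using F unfolding optimal_F_seq_def by simp
next
  case (Suc n)
  define T where "T = (2::complex)^n * \<tau>"
  have tpos: "Im \<tau> > 0" using T by (smt (verit) real_sqrt_gt_zero divide_pos_pos)
  have "Im \<tau> \<le> 2^n * Im \<tau>" using tpos by simp
  hence ImT: "Im \<tau> \<le> Im T" unfolding T_def Im_pow2 .
  have T1: "Im T \<ge> sqrt 3 / 4" using T ImT by linarith
  have w1': "Im w \<le> Im T / 4" using w1 ImT by linarith
  have TT: "Im T > 0" using tpos ImT by linarith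
  have g1: "Re (theta00 w T) > 0" "cmod (theta00 w T - theta01 w T) < cmod (theta00 w T + theta01 w T)"
    using good_theta[OF T1 w0 w1'] unfolding theta00_def theta01_def by auto
  have g2: "Re (theta00 0 T) > 0" "cmod (theta00 0 T - theta01 0 T) < cmod (theta00 0 T + theta01 0 T)"
    using good_theta[OF T1, of 0] TT unfolding theta00_def theta01_def by auto
  obtain a b c d where gr1: "good_roots (x n) (y n) a b" and gr2: "good_roots (z n) (t n) c d"
    and xs: "x (Suc n) = (a * c + b * d) / 2" and ys: "y (Suc n) = (a * d + b * c) / 2"
    and zs: "z (Suc n) = (z n + t n) / 2" and ts: "t (Suc n) = c * d"
    using F unfolding optimal_F_seq_def by blast
  have IH: "x n = (theta00 w T)^2" "y n = (theta01 w T)^2" "z n = (theta00 0 T)^2" "t n = (theta01 0 T)^2"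
    using Suc.IH unfolding T_def by auto
  have ab: "a = theta00 w T \<and> b = theta01 w T"
    by (rule good_roots_unique[OF _ g1]) (use gr1 IH in simp)
  have cd: "c = theta00 0 T \<and> d = theta01 0 T"
    by (rule good_roots_unique[OF _ g2]) (use gr2 IH in simp)
  have T2: "2^Suc n * \<tau> = 2 * T" unfolding T_def by simp
  show ?case unfolding T2 xs ys zs ts
    using ab cd IH step_x[OF TT, of w] step_y[OF TT, of w] step_z[OF TT] step_t[OF TT] by simp
qed




definition phi :: "complex \<Rightarrow> complex \<Rightarrow> int \<Rightarrow> complex" where
  "phi x Q k = Q^(nat (k^2)) * exp (2 * complex_of_real pi * \<i> * of_int k * x)"

definition Th :: "complex \<Rightarrow> complex \<Rightarrow> complex" where
  "Th x Q = infsum (phi x Q) UNIV"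

lemma tg_phi: "tg x T k = phi x (exp (complex_of_real pi * \<i> * T)) k"
proof -
  have e: "of_nat (nat (k^2)) = (of_int k :: complex)^2"
    by (metis of_int_of_nat_eq of_int_power zero_le_power2 nat_0_le)
  have "exp (complex_of_real pi * \<i> * T * (of_int k)^2) = exp (of_nat (nat (k^2)) * (complex_of_real pi * \<i> * T))"
    unfolding e by (simp add: algebra_simps)
  also have "\<dots> = exp (complex_of_real pi * \<i> * T) ^ nat (k^2)" by (rule exp_of_nat_mult)
  finally show ?thesis unfolding tg_def phi_def exp_add by simp
qed

lemma jtheta_Th: "jtheta x T = Th x (exp (complex_of_real pi * \<i> * T))"
  unfolding jtheta_tg Th_def tg_phi ..

lemma norm_phi: "norm (phi x Q k) = norm Q ^ nat (k^2) * exp (- 2 * pi * of_int k * Im x)"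
  unfolding phi_def by (simp add: norm_mult norm_power)

lemma rho_summable:
  assumes "0 < \<rho>" "\<rho> < 1"
  shows "(\<lambda>k::int. \<rho> ^ nat (k^2) * exp (- 2 * pi * of_int k * Im x)) summable_on UNIV"
proof -
  define T where "T = \<i> * complex_of_real (- ln \<rho> / pi)"
  have lnr: "ln \<rho> < 0" using assms by simp
  have TT: "Im T > 0" unfolding T_def using lnr by (simp add: divide_neg_pos)
  have "norm (tg x T k) = \<rho> ^ nat (k^2) * exp (- 2 * pi * of_int k * Im x)" for k
  proof -
    have e: "real (nat (k^2)) = (of_int k)^2" by simp
    have "- pi * Im T * (of_int k)^2 = of_nat (nat (k^2)) * ln \<rho>"
      unfolding T_def e by simp
    hence "norm (tg x T k) = exp (of_nat (nat (k^2)) * ln \<rho>) * exp (- 2 * pi * of_int k * Im x)"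
      unfolding norm_tg by (simp add: exp_diff exp_add exp_minus field_simps)
    also have "exp (of_nat (nat (k^2)) * ln \<rho>) = \<rho> ^ nat (k^2)"
      unfolding exp_of_nat_mult using assms by simp
    finally show ?thesis .
  qed
  thus ?thesis using tg_abs_summable[OF TT, of x] by simp
qed

lemma phi_abs_summable:
  assumes "norm Q < 1"
  shows "(\<lambda>k. norm (phi x Q k)) summable_on UNIV"
proof -
  define \<rho> where "\<rho> = (1 + norm Q)/2"
  have r: "0 < \<rho>" "\<rho> < 1" "norm Q \<le> \<rho>" proof -
    have "0 \<le> norm Q" by simp
    show "0 < \<rho>" unfolding \<rho>_def by (intro divide_pos_pos add_pos_nonneg) auto
    show "\<rho> < 1" using assms unfolding \<rho>_def by (simp add: field_simps)
    show "norm Q \<le> \<rho>" using assms unfolding \<rho>_def by (simp add: field_simps)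
  qed
  show ?thesis
    by (rule summable_on_comparison_test[OF rho_summable[OF r(1,2), of x]])
       (auto simp: norm_phi intro!: mult_right_mono power_mono r(3))
qed

lemma Th_suminf:
  assumes "norm Q < 1"
  shows "Th x Q = suminf (\<lambda>i. phi x Q (int_decode i))"
proof -
  have "(phi x Q has_sum Th x Q) UNIV"
    unfolding Th_def by (rule has_sum_infsum, rule abs_summable_summable, rule phi_abs_summable[OF assms])
  hence "((\<lambda>i. phi x Q (int_decode i)) has_sum Th x Q) UNIV"
    using has_sum_reindex_bij_betw[OF bij_int_decode, of "phi x Q"] by simp
  hence "(\<lambda>i. phi x Q (int_decode i)) sums Th x Q" by (rule has_sum_imp_sums)
  thus ?thesis by (simp add: sums_iff)
qed

lemma Th_holo: "Th x holomorphic_on ball 0 1"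
proof -
  define g where "g = (\<lambda>Q. suminf (\<lambda>i. phi x Q (int_decode i)))"
  have "g holomorphic_on ball 0 1"
  proof (rule holomorphic_uniform_sequence[where f="\<lambda>N Q. \<Sum>i<N. phi x Q (int_decode i)"])
    show "open (ball (0::complex) 1)" by simp
    show "(\<lambda>Q. \<Sum>i<N. phi x Q (int_decode i)) holomorphic_on ball 0 1" for N
      unfolding phi_def by (intro holomorphic_intros)
    fix z :: complex assume z: "z \<in> ball 0 1"
    define d where "d = (1 - norm z)/2"
    define \<rho> where "\<rho> = (1 + norm z)/2"
    have d: "d > 0" using z by (simp add: d_def)
    have r: "0 < \<rho>" "\<rho> < 1" proof -
      have "0 \<le> norm z" by simp
      show "0 < \<rho>" unfolding \<rho>_def by (intro divide_pos_pos add_pos_nonneg) auto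
      show "\<rho> < 1" using z unfolding \<rho>_def by simp
    qed
    have sub: "cball z d \<subseteq> ball 0 1"
    proof
      fix Q assume "Q \<in> cball z d"
      hence "norm Q \<le> norm z + d" using norm_triangle_sub[of Q z] by (simp add: dist_norm norm_minus_commute)
      thus "Q \<in> ball 0 1" using z by (simp add: d_def field_simps)
    qed
    have "uniform_limit (cball z d) (\<lambda>N Q. \<Sum>i<N. phi x Q (int_decode i)) g sequentially"
      unfolding g_def
    proof (rule Weierstrass_m_test)
      fix n Q assume "Q \<in> cball z d"
      hence "norm Q \<le> norm z + d" using norm_triangle_sub[of Q z] by (simp add: dist_norm norm_minus_commute)
      hence "norm Q \<le> \<rho>" by (simp add: d_def \<rho>_def field_simps)
      thus "norm (phi x Q (int_decode n)) \<le> \<rho> ^ nat ((int_decode n)^2) * exp (- 2 * pi * of_int (int_decode n) * Im x)"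
        unfolding norm_phi by (intro mult_right_mono power_mono) auto
    next
      have "(\<lambda>k::int. \<rho> ^ nat (k^2) * exp (- 2 * pi * of_int k * Im x)) summable_on UNIV"
        by (rule rho_summable[OF r])
      hence "(\<lambda>n. \<rho> ^ nat ((int_decode n)^2) * exp (- 2 * pi * of_int (int_decode n) * Im x)) summable_on UNIV"
        using summable_on_reindex_bij_betw[OF bij_int_decode, of "\<lambda>k::int. \<rho> ^ nat (k^2) * exp (- 2 * pi * of_int k * Im x)"] by simp
      thus "summable (\<lambda>n. \<rho> ^ nat ((int_decode n)^2) * exp (- 2 * pi * of_int (int_decode n) * Im x))"
        by (rule summable_on_imp_summable)
    qed
    thus "\<exists>d>0. cball z d \<subseteq> ball 0 1 \<and> uniform_limit (cball z d) (\<lambda>N Q. \<Sum>i<N. phi x Q (int_decode i)) g sequentially"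
      using d sub by blast
  qed
  thus ?thesis
    by (rule holomorphic_transform) (simp add: g_def Th_suminf)
qed

lemma Th_zero: "Th x 0 = 1"
proof -
  have "Th x 0 = infsum (phi x 0) {0}"
    unfolding Th_def by (rule infsum_cong_neutral) (auto simp: phi_def)
  also have "\<dots> = 1" by (simp add: phi_def)
  finally show ?thesis .
qed




lemma holo_isCont:
  assumes "F holomorphic_on ball 0 r" "norm u < r"
  shows "isCont F u"
proof -
  have "continuous_on (ball 0 r) F" using assms(1) by (rule holomorphic_on_imp_continuous_on)
  thus ?thesis using assms(2) by (simp add: continuous_on_eq_continuous_at)
qed

lemma quad_gen:
  fixes F :: "complex \<Rightarrow> complex" and q a :: "nat \<Rightarrow> complex"
  assumes hol: "F holomorphic_on ball 0 1" and qs: "\<And>n. q (Suc n) = (q n)^2"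
    and q0: "norm (q 0) < 1" "q 0 \<noteq> 0" and a: "\<And>n. a n = F (q n)"
  shows "quad_convergent a (F 0)"
proof -
  define r0 where "r0 = norm (q 0)"
  have r0: "r0 < 1" using q0 unfolding r0_def by simp
  have qn: "norm (q n) = r0 ^ (2^n)" for n
    by (induction n) (auto simp: qs norm_power power_mult[symmetric] mult.commute r0_def)
  have qnz: "q n \<noteq> 0" for n by (induction n) (use q0 qs in auto)
  have qb: "norm (q n) < 1" for n
    unfolding qn using r0 by (simp add: r0_def power_less_one_iff)
  have "(\<lambda>n. r0 ^ n) \<longlonglongrightarrow> 0" by (rule LIMSEQ_power_zero) (use r0 in \<open>simp add: r0_def\<close>)
  hence "((\<lambda>n. r0 ^ n) \<circ> (\<lambda>n::nat. 2^n)) \<longlonglongrightarrow> 0"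
    by (rule LIMSEQ_subseq_LIMSEQ) (simp add: strict_mono_def)
  hence "(\<lambda>n. norm (q n)) \<longlonglongrightarrow> 0" by (simp add: o_def qn)
  hence qlim: "q \<longlonglongrightarrow> 0" by (rule tendsto_norm_zero_cancel)
  have cF: "isCont F 0" by (rule holo_isCont[OF hol]) simp
  have alim: "a \<longlonglongrightarrow> F 0" unfolding a by (rule isCont_tendsto_compose[OF cF qlim])
  show ?thesis
  proof (cases "F constant_on ball 0 1")
    case True
    then obtain c where c: "\<And>w. w \<in> ball 0 1 \<Longrightarrow> F w = c" unfolding constant_on_def by blast
    have "a n = c" for n using c qb unfolding a by simp
    thus ?thesis unfolding quad_convergent_def using alim
      by (intro conjI exI[of _ 1]) auto
  next
    case False
    have nc: "\<not> (\<lambda>w. F w - F 0) constant_on ball 0 1"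
    proof
      assume "(\<lambda>w. F w - F 0) constant_on ball 0 1"
      then obtain c where "\<And>w. w \<in> ball 0 1 \<Longrightarrow> F w - F 0 = c" unfolding constant_on_def by blast
      hence "\<And>w. w \<in> ball 0 1 \<Longrightarrow> F w = c + F 0" by (metis diff_eq_eq add.commute)
      thus False using False unfolding constant_on_def by blast
    qed
    have h1: "(\<lambda>w. F w - F 0) holomorphic_on ball 0 1" by (intro holomorphic_intros hol)
    obtain G \<rho> m where m: "0 < m" and rho: "0 < \<rho>" and sub: "ball 0 \<rho> \<subseteq> ball (0::complex) 1"
      and Gh: "G holomorphic_on ball 0 \<rho>"
      and Fe: "\<And>w. w \<in> ball 0 \<rho> \<Longrightarrow> F w - F 0 = (w - 0)^m * G w"
      and Gnz: "\<And>w. w \<in> ball 0 \<rho> \<Longrightarrow> G w \<noteq> 0"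
      by (rule holomorphic_factor_zero_nonconstant[OF h1 open_ball connected_ball _ _ nc]) auto
    define H where "H = (\<lambda>u. u^m * G (u^2) - G u)"
    define h0 where "h0 = norm (G 0)"
    have h0: "h0 > 0" unfolding h0_def using Gnz rho by simp
    have cG: "isCont G 0" by (rule holo_isCont[OF Gh]) (use rho in simp)
    have cG2: "isCont (\<lambda>u. G (u^2)) 0"
    proof -
      have c0: "isCont G 0" using cG by simp
      have "isCont (\<lambda>u::complex. u^2) 0" by (intro continuous_intros)
      thus ?thesis using isCont_o2[where f="\<lambda>u::complex. u^2" and g=G and a=0] c0 by simp
    qed
    have cH: "isCont H 0" unfolding H_def by (intro continuous_intros cG cG2)
    have H0: "H 0 = - G 0" unfolding H_def using m by simp
    have Hlim: "(\<lambda>n. H (q n)) \<longlonglongrightarrow> - G 0"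
      using isCont_tendsto_compose[OF cH qlim] H0 by simp
    have ev1: "eventually (\<lambda>n. dist (H (q n)) (- G 0) < h0/2) sequentially"
      using tendstoD[OF Hlim, of "h0/2"] h0 by simp
    have ev2: "eventually (\<lambda>n. dist (q n) 0 < \<rho>) sequentially"
      using qlim rho by (auto simp: tendsto_iff)
    from eventually_conj[OF ev1 ev2] obtain N where
      N: "\<And>n. n \<ge> N \<Longrightarrow> dist (H (q n)) (- G 0) < h0/2 \<and> dist (q n) 0 < \<rho>"
      unfolding eventually_sequentially by blast
    have Hb: "h0/2 \<le> norm (H (q n)) \<and> norm (H (q n)) \<le> 2*h0" if "n \<ge> N" for n
    proof -
      have d: "norm (H (q n) + G 0) < h0/2" using N[OF that] by (simp add: dist_norm)
      have "norm (- G 0) \<le> norm (H (q n)) + norm (H (q n) + G 0)"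
        using norm_triangle_ineq4[of "H (q n)" "H (q n) + G 0"] by simp
      hence l: "h0 \<le> norm (H (q n)) + norm (H (q n) + G 0)" unfolding h0_def by simp
      have "norm (H (q n)) \<le> norm (H (q n) + G 0) + norm (G 0)"
        using norm_triangle_ineq4[of "H (q n) + G 0" "G 0"] by simp
      thus ?thesis using l d unfolding h0_def by linarith
    qed
    have diff: "a (Suc n) - a n = (q n)^m * H (q n)" if "n \<ge> N" for n
    proof -
      have qin: "q n \<in> ball 0 \<rho>" using N[OF that] by (simp add: dist_norm)
      have "norm ((q n)^2) \<le> norm (q n)"
      proof -
        have "norm ((q n)^2) = norm (q n) * norm (q n)" by (simp add: norm_mult power2_eq_square)
        also have "\<dots> \<le> norm (q n)" using qb[of n] by (intro mult_left_le_one_le) auto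
        finally show ?thesis .
      qed
      hence q2in: "(q n)^2 \<in> ball 0 \<rho>" using qin by simp
      have "a (Suc n) - a n = (F ((q n)^2) - F 0) - (F (q n) - F 0)" unfolding a qs by simp
      also have "\<dots> = ((q n)^2)^m * G ((q n)^2) - (q n)^m * G (q n)"
        using Fe[OF q2in] Fe[OF qin] by simp
      also have "\<dots> = ((q n)^m)^2 * G ((q n)^2) - (q n)^m * G (q n)"
        by (metis power_mult mult.commute)
      also have "\<dots> = (q n)^m * H (q n)"
        unfolding H_def by (simp add: algebra_simps power2_eq_square)
      finally show ?thesis .
    qed
    have "\<forall>n\<ge>Suc N. cmod (a (Suc n) - a n) \<le> (8/h0) * (cmod (a n - a (n - 1)))^2"
    proof (intro allI impI)
      fix n assume n: "n \<ge> Suc N"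
      then obtain k where k: "n = Suc k" and kN: "k \<ge> N" by (cases n) auto
      define p where "p = norm ((q k)^m)"
      have e1: "cmod (a (Suc n) - a n) = p^2 * norm (H (q n))"
      proof -
        have c1: "cmod (a (Suc n) - a n) = norm ((q n)^m) * norm (H (q n))"
          using diff[of n] n by (simp add: norm_mult)
        have c2: "(q n)^m = ((q k)^m)^2" unfolding k qs by (metis power_mult mult.commute)
        show ?thesis unfolding c1 c2 by (simp add: p_def norm_power)
      qed
      have e2: "cmod (a n - a (n - 1)) = p * norm (H (q k))"
        using diff[OF kN] k by (simp add: p_def norm_mult)
      have b1: "norm (H (q n)) \<le> 2*h0" using Hb[of n] n by simp
      have b2: "h0/2 \<le> norm (H (q k))" using Hb[OF kN] by simp
      have "p^2 * norm (H (q n)) \<le> p^2 * (2*h0)" using b1 by (intro mult_left_mono) auto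
      also have "\<dots> = (8/h0) * (p * (h0/2))^2" using h0 by (simp add: power2_eq_square field_simps)
      also have "\<dots> \<le> (8/h0) * (p * norm (H (q k)))^2"
        using b2 h0 by (intro mult_left_mono power_mono mult_left_mono) (auto simp: p_def)
      finally show "cmod (a (Suc n) - a n) \<le> (8/h0) * (cmod (a n - a (n - 1)))^2"
        unfolding e1 e2 .
    qed
    thus ?thesis unfolding quad_convergent_def eventually_sequentially using alim h0
      by (intro conjI exI[of _ "8/h0"]) auto
  qed
qed




theorem mainTheorem7:
  fixes \<tau> w :: complex and x y z t :: "nat \<Rightarrow> complex"
  assumes "Im \<tau> > 0" and "Im \<tau> \<ge> sqrt 3 / 4"
    and "0 \<le> Im w" and "Im w \<le> Im \<tau> / 4"
    and "optimal_F_seq x y z t ((theta00 w \<tau>)^2) ((theta01 w \<tau>)^2) ((theta00 0 \<tau>)^2) ((theta01 0 \<tau>)^2)"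
  shows "quad_convergent x 1 \<and> quad_convergent y 1 \<and> quad_convergent z 1 \<and> quad_convergent t 1"
proof -
  define q where "q n = exp (complex_of_real pi * \<i> * (2^n * \<tau>))" for n
  have S: "x n = (theta00 w (2^n*\<tau>))^2 \<and> y n = (theta01 w (2^n*\<tau>))^2 \<and>
         z n = (theta00 0 (2^n*\<tau>))^2 \<and> t n = (theta01 0 (2^n*\<tau>))^2" for n
    by (rule seq_theta) (use assms in auto)
  have qs: "q (Suc n) = (q n)^2" for n
  proof -
    have e: "complex_of_real pi * \<i> * (2^Suc n * \<tau>) = of_nat 2 * (complex_of_real pi * \<i> * (2^n * \<tau>))"
      by simp
    have "q (Suc n) = exp (of_nat 2 * (complex_of_real pi * \<i> * (2^n * \<tau>)))" unfolding q_def e ..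
    also have "\<dots> = (q n)^2" unfolding exp_of_nat_mult q_def ..
    finally show ?thesis .
  qed
  have q0: "norm (q 0) < 1" "q 0 \<noteq> 0" unfolding q_def using assms(1) by auto
  have gen: "quad_convergent a 1" if "\<And>n. a n = (Th v (q n))^2" for a v
  proof -
    have "quad_convergent a ((\<lambda>Q. (Th v Q)^2) 0)"
      by (rule quad_gen[OF _ qs q0]) (auto intro!: holomorphic_intros Th_holo that)
    thus ?thesis by (simp add: Th_zero)
  qed
  have "quad_convergent x 1"
    by (rule gen[of _ w]) (simp add: S theta00_def jtheta_Th q_def)
  moreover have "quad_convergent y 1"
    by (rule gen[of _ "w + 1/2"]) (simp add: S theta01_def jtheta_Th q_def)
  moreover have "quad_convergent z 1"
    by (rule gen[of _ 0]) (simp add: S theta00_def jtheta_Th q_def)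
  moreover have "quad_convergent t 1"
    by (rule gen[of _ "0 + 1/2"]) (simp only: S theta01_def jtheta_Th q_def)
  ultimately show ?thesis by blast
qed


end
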